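(* Let $k\ge 0$ be an integer and let $G$ be a $(k+1)$-edge-connected graph with $m$ edges. Then \[f_2(M(G))\leq m-\frac{3(k+1)}{2}.\]
   Context: $M(G)$ is the cycle matroid of $G=(V,E)$: the matroid on $E$ with rank function $rk(A)=|V|-k(A)$, where $k(A)$ is the number of components of the spanning subgraph $(V,A)$; let $r=rk(E)$. A flat of $M(G)$ is a set $F\subseteq E$ with $F=\{e\in E: rk(F\cup\{e\})=rk(F)\}$, and $f_2(M(G))=\max\{|F|: F\text{ a flat of } M(G),\ rk(F)=r-2\}$. *)

theory Defs
  imports Complex_Main
begin

text \<open>A finite multigraph (loops and parallel edges allowed) is given by a vertex set V,
an edge set E and an incidence map ends: each edge has one (loop) or two end vertices.\<close>

definition graph :: "'v set \<Rightarrow> 'e set \<Rightarrow> ('e \<Rightarrow> 'v set) \<Rightarrow> bool" where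
  "graph V E ends \<longleftrightarrow> finite V \<and> finite E \<and>
     (\<forall>e\<in>E. ends e \<subseteq> V \<and> 1 \<le> card (ends e) \<and> card (ends e) \<le> 2)"

definition adj :: "('e \<Rightarrow> 'v set) \<Rightarrow> 'e set \<Rightarrow> 'v \<Rightarrow> 'v \<Rightarrow> bool" where
  "adj ends A u v \<longleftrightarrow> (\<exists>e\<in>A. ends e = {u, v})"

definition num_comp :: "'v set \<Rightarrow> ('e \<Rightarrow> 'v set) \<Rightarrow> 'e set \<Rightarrow> nat" where
  "num_comp V ends A = card (V // {(u, v). u \<in> V \<and> v \<in> V \<and> (adj ends A)\<^sup>*\<^sup>* u v})"

text \<open>Rank function of the cycle matroid M(G): rk(A) = |V| - k(A).\<close>
definition cyc_rank :: "'v set \<Rightarrow> ('e \<Rightarrow> 'v set) \<Rightarrow> 'e set \<Rightarrow> int" where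
  "cyc_rank V ends A = int (card V) - int (num_comp V ends A)"

definition is_flat :: "'v set \<Rightarrow> 'e set \<Rightarrow> ('e \<Rightarrow> 'v set) \<Rightarrow> 'e set \<Rightarrow> bool" where
  "is_flat V E ends F \<longleftrightarrow>
     F = {e \<in> E. cyc_rank V ends (F \<union> {e}) = cyc_rank V ends F}"

definition edge_connected :: "'v set \<Rightarrow> 'e set \<Rightarrow> ('e \<Rightarrow> 'v set) \<Rightarrow> nat \<Rightarrow> bool" where
  "edge_connected V E ends l \<longleftrightarrow>
     num_comp V ends E = 1 \<and>
     (\<forall>S \<subseteq> E. card S < l \<longrightarrow> num_comp V ends (E - S) = 1)"

end

theory Submission
  imports Defs
begin

definition RR :: "'v set \<Rightarrow> ('e \<Rightarrow> 'v set) \<Rightarrow> 'e set \<Rightarrow> ('v \<times> 'v) set" where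
  "RR V ends A = {(u, v). u \<in> V \<and> v \<in> V \<and> (adj ends A)\<^sup>*\<^sup>* u v}"

lemma num_comp_RR: "num_comp V ends A = card (V // RR V ends A)"
  unfolding num_comp_def RR_def by simp

lemma rt_sym:
  assumes "(adj ends A)\<^sup>*\<^sup>* u v" shows "(adj ends A)\<^sup>*\<^sup>* v u"
  using assms
proof (induction rule: rtranclp_induct)
  case base then show ?case by simp
next
  case (step y z)
  have "adj ends A z y" using step(2) unfolding adj_def by (auto simp: insert_commute)
  then show ?case using step(3) by (meson converse_rtranclp_into_rtranclp)
qed

lemma equiv_RR: "equiv V (RR V ends A)"
  unfolding equiv_def refl_on_def sym_def trans_def RR_def
  by (auto intro: rt_sym rtranclp_trans)

lemma class_mem:
  assumes "equiv V R" "X \<in> V // R" "a \<in> X" "(a, b) \<in> R" shows "b \<in> X"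
proof -
  obtain x where x: "X = R``{x}" "x \<in> V" using assms(2) by (rule quotientE)
  then show ?thesis using assms(1,3,4) unfolding equiv_def trans_def by blast
qed

lemma class_iff:
  assumes "equiv V R" "X \<in> V // R" "a \<in> V" shows "a \<in> X \<longleftrightarrow> X = R``{a}"
proof -
  obtain x where x: "X = R``{x}" "x \<in> V" using assms(2) by (rule quotientE)
  show ?thesis using x assms(1,3) equiv_class_eq_iff[OF assms(1)] equiv_class_self[OF assms(1) assms(3)]
    by (metis Image_singleton_iff)
qed

lemma card2_eq:
  assumes "a \<in> S" "b \<in> S" "a \<noteq> b" "card S \<le> 2" "1 \<le> card S"
  shows "S = {a, b}"
proof -
  have fin: "finite S" using assms(5) by (metis card.infinite not_one_le_zero)
  have "{a,b} \<subseteq> S" using assms by auto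
  moreover have "card {a,b} = 2" using assms(3) by simp
  ultimately show ?thesis using fin assms(4) by (metis card_seteq)
qed

lemma flat_closed:
  assumes "e \<in> E" "\<forall>a\<in>ends e. \<forall>b\<in>ends e. (adj ends F)\<^sup>*\<^sup>* a b"
  shows "RR V ends (F \<union> {e}) = RR V ends F"
proof -
  have "(adj ends (F \<union> {e}))\<^sup>*\<^sup>* x y \<Longrightarrow> (adj ends F)\<^sup>*\<^sup>* x y" for x y
  proof (induction rule: rtranclp_induct)
    case base then show ?case by simp
  next
    case (step y z)
    from step(2) obtain e' where e': "e' \<in> F \<union> {e}" "ends e' = {y, z}" unfolding adj_def by auto
    show ?case
    proof (cases "e' \<in> F")
      case True
      then have "adj ends F y z" using e' unfolding adj_def by auto
      then show ?thesis using step(3) by simp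
    next
      case False
      then have "e' = e" using e' by auto
      then have "(adj ends F)\<^sup>*\<^sup>* y z" using assms(2) e' by auto
      then show ?thesis using step(3) by (meson rtranclp_trans)
    qed
  qed
  moreover have "(adj ends F)\<^sup>*\<^sup>* x y \<Longrightarrow> (adj ends (F \<union> {e}))\<^sup>*\<^sup>* x y" for x y
    by (erule rtranclp_mono[THEN predicate2D, rotated]) (auto simp: adj_def)
  ultimately show ?thesis unfolding RR_def by blast
qed



theorem lemma3p6:
  fixes V :: "'v set" and E :: "'e set" and ends :: "'e \<Rightarrow> 'v set" and k :: nat
  assumes "graph V E ends"
    and "edge_connected V E ends (k + 1)"
  shows "\<forall>F. is_flat V E ends F \<and> cyc_rank V ends F = cyc_rank V ends E - 2 \<longrightarrow>
           real (card F) \<le> real (card E) - 3 * (real k + 1) / 2"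
proof (intro allI impI)
  fix F assume H: "is_flat V E ends F \<and> cyc_rank V ends F = cyc_rank V ends E - 2"
  have flat: "F = {e \<in> E. cyc_rank V ends (F \<union> {e}) = cyc_rank V ends F}"
    using H unfolding is_flat_def by blast
  have FE: "F \<subseteq> E" by (subst flat) auto
  have finE: "finite E" and finV: "finite V"
    and G: "\<And>e. e \<in> E \<Longrightarrow> ends e \<subseteq> V \<and> 1 \<le> card (ends e) \<and> card (ends e) \<le> 2"
    using assms(1) unfolding graph_def by auto
  have nE: "num_comp V ends E = 1" using assms(2) unfolding edge_connected_def by blast
  have ec: "\<And>S. S \<subseteq> E \<Longrightarrow> card S < k + 1 \<Longrightarrow> num_comp V ends (E - S) = 1"
    using assms(2) unfolding edge_connected_def by blast
  define R where "R = RR V ends F"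
  define Q where "Q = V // R"
  have eqv: "equiv V R" unfolding R_def by (rule equiv_RR)
  have cQ: "card Q = 3"
    using H nE unfolding Q_def R_def cyc_rank_def num_comp_RR by simp
  have finQ: "finite Q" using cQ by (metis card.infinite zero_neq_numeral)
  define D where "D = E - F"
  have finD: "finite D" unfolding D_def using finE by simp
  define S where "S X = {e \<in> E. \<exists>p\<in>ends e. \<exists>q\<in>ends e. p \<in> X \<and> q \<notin> X}" for X
  have RI: "(u, v) \<in> R \<longleftrightarrow> u \<in> V \<and> v \<in> V \<and> (adj ends F)\<^sup>*\<^sup>* u v" for u v
    unfolding R_def RR_def by simp
  have SD: "S X \<subseteq> D" if X: "X \<in> Q" for X
  proof
    fix e assume e: "e \<in> S X"
    then obtain p q where pq: "e \<in> E" "p \<in> ends e" "q \<in> ends e" "p \<in> X" "q \<notin> X"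
      unfolding S_def by blast
    show "e \<in> D"
    proof (rule ccontr)
      assume "e \<notin> D"
      then have eF: "e \<in> F" using pq unfolding D_def by blast
      have "ends e = {p, q}" using card2_eq[of p "ends e" q] G[OF pq(1)] pq by blast
      then have "adj ends F p q" using eF unfolding adj_def by blast
      then have "(p, q) \<in> R" unfolding RI using G[OF pq(1)] pq by auto
      then have "q \<in> X" using class_mem[OF eqv X[unfolded Q_def] pq(4)] by blast
      then show False using pq by blast
    qed
  qed
  have Sk: "k + 1 \<le> card (S X)" if X: "X \<in> Q" for X
  proof (rule ccontr)
    assume "\<not> k + 1 \<le> card (S X)"
    then have small: "card (S X) < k + 1" by simp
    have "\<exists>Y\<in>Q. Y \<noteq> X"
    proof -
      obtain a b c where "Q = {a, b, c}" "a \<noteq> b" using cQ card_3_iff[of Q] by blast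
      then show ?thesis by blast
    qed
    then obtain Y where Y: "Y \<in> Q" "Y \<noteq> X" by blast
    obtain x where x: "X = R``{x}" "x \<in> V" using X[unfolded Q_def] by (rule quotientE)
    obtain y where y: "Y = R``{y}" "y \<in> V" using Y(1)[unfolded Q_def] by (rule quotientE)
    have xX: "x \<in> X" using x equiv_class_self[OF eqv] by blast
    have yY: "y \<in> Y" using y equiv_class_self[OF eqv] by blast
    have yX: "y \<notin> X" using quotient_disj[OF eqv X[unfolded Q_def] Y(1)[unfolded Q_def]] Y(2) yY by blast
    have stay: "(adj ends (E - S X))\<^sup>*\<^sup>* x z \<Longrightarrow> z \<in> X" for z
    proof (induction rule: rtranclp_induct)
      case base then show ?case by (rule xX)
    next
      case (step a b)
      from step(2) obtain e where e: "e \<in> E" "e \<notin> S X" "ends e = {a, b}" unfolding adj_def by auto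
      show ?case
      proof (rule ccontr)
        assume "b \<notin> X"
        then have "e \<in> S X" unfolding S_def using e step(3) by blast
        then show False using e by blast
      qed
    qed
    define R' where "R' = RR V ends (E - S X)"
    have eqv': "equiv V R'" unfolding R'_def by (rule equiv_RR)
    have "S X \<subseteq> E" unfolding S_def by blast
    then have "num_comp V ends (E - S X) = 1" using ec small by simp
    then have "card (V // R') = 1" unfolding R'_def num_comp_RR .
    then obtain Z where Z: "V // R' = {Z}" by (rule card_1_singletonE)
    have "R'``{x} \<in> V // R'" by (rule quotientI[OF x(2)])
    moreover have "R'``{y} \<in> V // R'" by (rule quotientI[OF y(2)])
    ultimately have "R'``{x} = R'``{y}" unfolding Z by simp
    then have "y \<in> R'``{x}" using equiv_class_self[OF eqv' y(2)] by simp
    then have "(adj ends (E - S X))\<^sup>*\<^sup>* x y" unfolding R'_def RR_def by simp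
    then show False using stay yX by blast
  qed
  have Dcut: "\<exists>a b. ends e = {a, b} \<and> a \<in> V \<and> b \<in> V \<and> (a, b) \<notin> R" if e: "e \<in> D" for e
  proof -
    have eE: "e \<in> E" "e \<notin> F" using e unfolding D_def by auto
    have "\<exists>a\<in>ends e. \<exists>b\<in>ends e. \<not> (adj ends F)\<^sup>*\<^sup>* a b"
    proof (rule ccontr)
      assume "\<not> ?thesis"
      then have "\<forall>a\<in>ends e. \<forall>b\<in>ends e. (adj ends F)\<^sup>*\<^sup>* a b" by blast
      then have "RR V ends (F \<union> {e}) = RR V ends F" by (rule flat_closed[OF eE(1)])
      then have "cyc_rank V ends (F \<union> {e}) = cyc_rank V ends F"
        unfolding cyc_rank_def num_comp_RR by simp
      then have mem: "e \<in> {e \<in> E. cyc_rank V ends (F \<union> {e}) = cyc_rank V ends F}"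
        using eE(1) by simp
      have "e \<in> F" by (rule subsetD[OF flat[THEN equalityD2] mem])
      then show False using eE by blast
    qed
    then obtain a b where ab: "a \<in> ends e" "b \<in> ends e" "\<not> (adj ends F)\<^sup>*\<^sup>* a b" by blast
    have "a \<noteq> b" using ab(3) by auto
    then have "ends e = {a, b}" using card2_eq[of a "ends e" b] G[OF eE(1)] ab by blast
    moreover have "(a, b) \<notin> R" unfolding RI using ab(3) by simp
    ultimately show ?thesis using ab G[OF eE(1)] by blast
  qed
  have two: "card {X \<in> Q. e \<in> S X} = 2" if e: "e \<in> D" for e
  proof -
    obtain a b where ab: "ends e = {a, b}" "a \<in> V" "b \<in> V" "(a, b) \<notin> R" using Dcut[OF e] by blast
    have eE: "e \<in> E" using e unfolding D_def by auto
    have ne: "R``{a} \<noteq> R``{b}" using eq_equiv_class_iff[OF eqv ab(2) ab(3)] ab(4) by blast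
    have "{X \<in> Q. e \<in> S X} = {R``{a}, R``{b}}"
    proof (intro set_eqI iffI)
      fix X assume "X \<in> {X \<in> Q. e \<in> S X}"
      then have X: "X \<in> Q" "e \<in> S X" by auto
      then obtain p where p: "p \<in> ends e" "p \<in> X" unfolding S_def by blast
      have "p \<in> V" using p ab by auto
      then have "X = R``{p}" using class_iff[OF eqv X(1)[unfolded Q_def]] p by blast
      then show "X \<in> {R``{a}, R``{b}}" using p ab by auto
    next
      fix X assume "X \<in> {R``{a}, R``{b}}"
      moreover have "e \<in> S (R``{a})"
      proof -
        have "a \<in> R``{a}" using equiv_class_self[OF eqv ab(2)] .
        moreover have "b \<notin> R``{a}" using ab(4) by blast
        ultimately show ?thesis unfolding S_def using eE ab(1) by blast
      qed
      moreover have "e \<in> S (R``{b})"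
      proof -
        have "b \<in> R``{b}" using equiv_class_self[OF eqv ab(3)] .
        moreover have "a \<notin> R``{b}" using ab(4) eqv unfolding equiv_def sym_def by blast
        ultimately show ?thesis unfolding S_def using eE ab(1) by blast
      qed
      ultimately show "X \<in> {X \<in> Q. e \<in> S X}"
        using quotientI[OF ab(2), of R] quotientI[OF ab(3), of R] unfolding Q_def by auto
    qed
    then show ?thesis using ne by simp
  qed
  have "(\<Sum>X\<in>Q. card (S X)) = (\<Sum>X\<in>Q. \<Sum>e\<in>D. if e \<in> S X then 1 else 0)"
  proof (rule sum.cong[OF refl])
    fix X assume X: "X \<in> Q"
    have "(\<Sum>e\<in>D. if e \<in> S X then 1 else 0) = card (D \<inter> S X)"
      using finD by (simp add: sum.If_cases Int_def)
    also have "\<dots> = card (S X)" using SD[OF X] by (simp add: Int_absorb1)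
    finally show "card (S X) = (\<Sum>e\<in>D. if e \<in> S X then 1 else 0)" by simp
  qed
  also have "\<dots> = (\<Sum>e\<in>D. \<Sum>X\<in>Q. if e \<in> S X then 1 else 0)" by (rule sum.swap)
  also have "\<dots> = (\<Sum>e\<in>D. card {X \<in> Q. e \<in> S X})"
    using finQ by (intro sum.cong[OF refl]) (simp add: sum.If_cases Int_def)
  also have "\<dots> = (\<Sum>e\<in>D. 2)" using two by simp
  finally have sumeq: "(\<Sum>X\<in>Q. card (S X)) = 2 * card D" by simp
  have "card Q * (k + 1) \<le> (\<Sum>X\<in>Q. card (S X))"
    using sum_bounded_below[of Q "k+1" "\<lambda>X. card (S X)"] Sk by simp
  then have ineq: "3 * (k + 1) \<le> 2 * card D" using cQ sumeq by simp
  have "card D = card E - card F" unfolding D_def using FE finE by (simp add: card_Diff_subset finite_subset)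
  moreover have "card F \<le> card E" using FE finE by (simp add: card_mono)
  ultimately have "real (card D) = real (card E) - real (card F)" by simp
  moreover have "3 * (real k + 1) \<le> 2 * real (card D)" using ineq
  proof -
    have "real (3 * (k + 1)) \<le> real (2 * card D)" using ineq by (simp only: of_nat_le_iff)
    then show ?thesis by simp
  qed
  ultimately show "real (card F) \<le> real (card E) - 3 * (real k + 1) / 2" by linarith
qed

end
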